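(* Let $\rho\colon\mathrm{Isom}(\mathbf H^1_{\mathbb C})_o\to\mathrm{Isom}(\mathbf H^\infty_{\mathbb C})_o$ be an irreducible representation and let $t\in\mathbb R$ be such that the lift $\rho(g(\lambda,0))$ satisfies $\rho(g(\lambda,0))\eta_1=\lambda^t\eta_1$ for all $\lambda>0$ (i.e. $\chi(\lambda)=\lambda^t$). Then $0<t\le2$.
   Context: $\mathcal H$: separable complex Hilbert space with strongly non-degenerate Hermitian form $B$ (linear in first variable) of signature $(1,\infty)$; $\mathbf H^\infty_{\mathbb C}=\{[v]:B(v,v)>0\}$, $\cosh d([v],[w])=|B(v,w)|/\sqrt{B(v,v)B(w,w)}$, boundary = isotropic lines. $\mathbf H^1_{\mathbb C}$: $\mathbb C^2$ with $B(z,w)=z_1\bar w_1-z_2\bar w_2$, $\xi_{1,2}=(e_1\pm e_2)/\sqrt2$; $g(\lambda,b)\in SU(1,1)$ has matrix $\begin{pmatrix}\lambda&ib\\0&\lambda^{-1}\end{pmatrix}$ in basis $(\xi_1,\xi_2)$, $P=\{g(\lambda,b)\}$. Representations are orbitally continuous; irreducible = no fixed point in $\mathbf H^\infty_{\mathbb C}\cup\partial\mathbf H^\infty_{\mathbb C}$, no invariant pair of boundary points, no proper invariant complex hyperbolic subspace. For such $\rho$: $\eta_1$ = unique common fixed boundary point of $\rho(P)$, $\eta_2$ = other endpoint of the common axis of the $\rho(g(\lambda,0))$; isotropic representatives with $B(\eta_1,\eta_2)=1$. $\rho|_P$ lifts to a continuous homomorphism $P\to U(B)$ (still denoted $\rho$)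 with $B(\rho(g(\lambda,b))\eta_1,\eta_2)>0$; then $\rho(g(\lambda,b))\eta_1=\chi(\lambda)\eta_1$ for a continuous isomorphism $\chi\colon\mathbb R_{>0}\to\mathbb R_{>0}$, so $\chi(\lambda)=\lambda^t$ for some real $t$, and $t=\ell(\rho)$ is the displacement of $\rho$. *)

theory Defs
  imports "HOL-Analysis.Analysis"
begin

text \<open>Every separable complex Hilbert space with a strongly non-degenerate Hermitian
form of signature (1,infinity) is isomorphic to the following standard model:
square-summable sequences v :: nat => complex with
B(v,w) = v 0 * cnj (w 0) - sum over n>=1 of v n * cnj (w n)
(linear in the first variable).\<close>

type_synonym vec = "nat \<Rightarrow> complex"

definition Hsp :: "vec set" where
  "Hsp = {v. summable (\<lambda>n. (cmod (v n))^2)}"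

definition Bf :: "vec \<Rightarrow> vec \<Rightarrow> complex" where
  "Bf v w = v 0 * cnj (w 0) - (\<Sum>n. v (Suc n) * cnj (w (Suc n)))"

definition Qf :: "vec \<Rightarrow> real" where
  "Qf v = Re (Bf v v)"

definition smul :: "complex \<Rightarrow> vec \<Rightarrow> vec" where
  "smul c v = (\<lambda>n. c * v n)"

definition vadd :: "vec \<Rightarrow> vec \<Rightarrow> vec" where
  "vadd v w = (\<lambda>n. v n + w n)"

definition l2norm :: "vec \<Rightarrow> real" where
  "l2norm v = sqrt (\<Sum>n. (cmod (v n))^2)"

definition l2dist :: "vec \<Rightarrow> vec \<Rightarrow> real" where
  "l2dist v w = l2norm (\<lambda>n. v n - w n)"

definition cline :: "vec \<Rightarrow> vec set" where
  "cline v = {smul c v | c. True}"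

definition lines :: "vec set set" where
  "lines = {cline v | v. v \<in> Hsp \<and> v \<noteq> (\<lambda>_. 0)}"

definition lrep :: "vec set \<Rightarrow> vec" where
  "lrep L = (SOME v. v \<in> L \<and> v \<noteq> (\<lambda>_. 0))"

definition hyp_points :: "vec set set" where
  "hyp_points = {L \<in> lines. Qf (lrep L) > 0}"

definition bdry_points :: "vec set set" where
  "bdry_points = {L \<in> lines. Qf (lrep L) = 0}"

definition hdist :: "vec set \<Rightarrow> vec set \<Rightarrow> real" where
  "hdist L M = arcosh (cmod (Bf (lrep L) (lrep M)) / sqrt (Qf (lrep L) * Qf (lrep M)))"

definition unitaryB :: "(vec \<Rightarrow> vec) \<Rightarrow> bool" where
  "unitaryB T \<longleftrightarrow> T ` Hsp = Hsp \<and> inj_on T Hsp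
     \<and> (\<forall>v\<in>Hsp. \<forall>w\<in>Hsp. T (vadd v w) = vadd (T v) (T w))
     \<and> (\<forall>v\<in>Hsp. \<forall>c. T (smul c v) = smul c (T v))
     \<and> (\<forall>v\<in>Hsp. \<forall>w\<in>Hsp. Bf (T v) (T w) = Bf v w)"

text \<open>Elements of Isom(H^infinity_C)_o = PU(B), given by their action on lines
(interior points and boundary points).\<close>
definition isom_o :: "(vec set \<Rightarrow> vec set) \<Rightarrow> bool" where
  "isom_o F \<longleftrightarrow> (\<exists>T. unitaryB T \<and> (\<forall>L\<in>lines. F L = T ` L))"

definition Bc :: "complex^2 \<Rightarrow> complex^2 \<Rightarrow> complex" where
  "Bc z w = z$1 * cnj (w$1) - z$2 * cnj (w$2)"

definition SU11 :: "(complex^2^2) set" where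
  "SU11 = {M. det M = 1 \<and> (\<forall>z w. Bc (M *v z) (M *v w) = Bc z w)}"

text \<open>Change of basis: columns are xi_1=(e_1+e_2)/sqrt 2 and xi_2=(e_1-e_2)/sqrt 2; it is its own inverse.\<close>
definition Sxi :: "complex^2^2" where
  "Sxi = (\<chi> i j. complex_of_real (1 / sqrt 2) * (if i = 2 \<and> j = 2 then -1 else 1))"

text \<open>g(lambda,b): matrix [[lambda, i b],[0, 1/lambda]] in the basis (xi_1, xi_2).\<close>
definition gmat :: "real \<Rightarrow> real \<Rightarrow> complex^2^2" where
  "gmat l b = Sxi ** (\<chi> i j. if i = 1 then (if j = 1 then complex_of_real l else \<i> * complex_of_real b)
                               else (if j = 1 then 0 else complex_of_real (1 / l))) ** Sxi"

definition Pgrp :: "(complex^2^2) set" where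
  "Pgrp = {gmat l b | l b. l > 0}"

text \<open>A representation of Isom(H^1_C)_o = PSU(1,1) = SU(1,1)/{+-1} into
Isom(H^infinity_C)_o, given as a map on SU(1,1) which is a homomorphism and is
trivial on -1; orbitally continuous.\<close>
definition is_rep :: "(complex^2^2 \<Rightarrow> vec set \<Rightarrow> vec set) \<Rightarrow> bool" where
  "is_rep \<rho> \<longleftrightarrow>
     (\<forall>g\<in>SU11. isom_o (\<rho> g))
   \<and> (\<forall>g\<in>SU11. \<forall>h\<in>SU11. \<forall>L\<in>lines. \<rho> (g ** h) L = \<rho> g (\<rho> h L))
   \<and> (\<forall>L\<in>lines. \<rho> (- mat 1) L = L)
   \<and> (\<forall>x\<in>hyp_points. \<forall>g0\<in>SU11. \<forall>\<epsilon>>0. \<exists>\<delta>>0. \<forall>g\<in>SU11.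
        dist g g0 < \<delta> \<longrightarrow> hdist (\<rho> g x) (\<rho> g0 x) < \<epsilon>)"

definition closed_subspace :: "vec set \<Rightarrow> bool" where
  "closed_subspace W \<longleftrightarrow> W \<subseteq> Hsp \<and> (\<lambda>_. 0) \<in> W
     \<and> (\<forall>v\<in>W. \<forall>w\<in>W. vadd v w \<in> W) \<and> (\<forall>v\<in>W. \<forall>c. smul c v \<in> W)
     \<and> (\<forall>s w. (\<forall>n. s n \<in> W) \<and> w \<in> Hsp \<and> (\<lambda>n. l2dist (s n) w) \<longlonglongrightarrow> 0 \<longrightarrow> w \<in> W)"

definition irreducible_rep :: "(complex^2^2 \<Rightarrow> vec set \<Rightarrow> vec set) \<Rightarrow> bool" where
  "irreducible_rep \<rho> \<longleftrightarrow>
     \<comment> \<open>no fixed point in the space or its boundary\<close>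
     \<not> (\<exists>L \<in> hyp_points \<union> bdry_points. \<forall>g\<in>SU11. \<rho> g L = L)
     \<comment> \<open>no invariant pair of boundary points\<close>
   \<and> \<not> (\<exists>L1 \<in> bdry_points. \<exists>L2 \<in> bdry_points. L1 \<noteq> L2 \<and>
          (\<forall>g\<in>SU11. \<rho> g L1 \<in> {L1, L2} \<and> \<rho> g L2 \<in> {L1, L2}))
     \<comment> \<open>no proper invariant complex hyperbolic subspace\<close>
   \<and> \<not> (\<exists>W. closed_subspace W \<and> W \<noteq> Hsp \<and> (\<exists>v\<in>W. Qf v > 0) \<and>
          (\<forall>g\<in>SU11. \<forall>L\<in>hyp_points. L \<subseteq> W \<longrightarrow> \<rho> g L \<subseteq> W))"

end

theory Submission imports Defs begin

lemma Hsp_D: "x \<in> Hsp \<Longrightarrow> summable (\<lambda>n. (cmod (x n))^2)"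
  by (simp add: Hsp_def)

lemma Hsp_prod_summable:
  assumes "x \<in> Hsp" "y \<in> Hsp"
  shows "summable (\<lambda>n. cmod (x n) * cmod (y n))"
proof (rule summable_comparison_test')
  show "summable (\<lambda>n. ((cmod (x n))^2 + (cmod (y n))^2) / 2)"
    using Hsp_D[OF assms(1)] Hsp_D[OF assms(2)] by (intro summable_divide summable_add)
  show "norm (cmod (x n) * cmod (y n)) \<le> ((cmod (x n))^2 + (cmod (y n))^2) / 2" if "n \<ge> 0" for n
  proof -
    have "0 \<le> (cmod (x n) - cmod (y n))^2" by simp
    then show ?thesis by (simp add: power2_eq_square algebra_simps)
  qed
qed

lemma Hsp_cprod_summable:
  assumes "x \<in> Hsp" "y \<in> Hsp"
  shows "summable (\<lambda>n. x n * cnj (y n))"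
proof (rule summable_norm_cancel)
  have "(\<lambda>n. norm (x n * cnj (y n))) = (\<lambda>n. cmod (x n) * cmod (y n))"
    by (simp add: norm_mult)
  then show "summable (\<lambda>n. norm (x n * cnj (y n)))" using Hsp_prod_summable[OF assms] by simp
qed

lemma Hsp_cprod_summable_Suc:
  assumes "x \<in> Hsp" "y \<in> Hsp"
  shows "summable (\<lambda>n. x (Suc n) * cnj (y (Suc n)))"
  using Hsp_cprod_summable[OF assms] by (subst summable_Suc_iff)

lemma Hsp_vadd: assumes "x \<in> Hsp" "y \<in> Hsp" shows "vadd x y \<in> Hsp"
proof -
  have "summable (\<lambda>n. (cmod (x n + y n))^2)"
  proof (rule summable_comparison_test')
    show "summable (\<lambda>n. 2 * (cmod (x n))^2 + 2 * (cmod (y n))^2)"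
      using Hsp_D[OF assms(1)] Hsp_D[OF assms(2)] by (intro summable_mult summable_add)
    show "norm ((cmod (x n + y n))^2) \<le> 2 * (cmod (x n))^2 + 2 * (cmod (y n))^2" if "n\<ge>0" for n
    proof -
      have a: "cmod (x n + y n) \<le> cmod (x n) + cmod (y n)" by (rule norm_triangle_ineq)
      have "(cmod (x n + y n))^2 \<le> (cmod (x n) + cmod (y n))^2"
        using a by (simp add: power_mono)
      moreover have "0 \<le> (cmod (x n) - cmod (y n))^2" by simp
      ultimately show ?thesis by (simp add: power2_eq_square algebra_simps)
    qed
  qed
  then show ?thesis by (simp add: Hsp_def vadd_def)
qed

lemma Hsp_smul: assumes "x \<in> Hsp" shows "smul c x \<in> Hsp"
proof -
  have "summable (\<lambda>n. (cmod c)^2 * (cmod (x n))^2)"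
    using Hsp_D[OF assms] by (rule summable_mult)
  then show ?thesis by (simp add: Hsp_def smul_def norm_mult power_mult_distrib)
qed

lemma Bf_vadd_left:
  assumes "x \<in> Hsp" "y \<in> Hsp" "z \<in> Hsp"
  shows "Bf (vadd x y) z = Bf x z + Bf y z"
proof -
  have "(\<Sum>n. (x (Suc n) + y (Suc n)) * cnj (z (Suc n))) =
        (\<Sum>n. x (Suc n) * cnj (z (Suc n))) + (\<Sum>n. y (Suc n) * cnj (z (Suc n)))"
    using suminf_add[OF Hsp_cprod_summable_Suc[OF assms(1,3)] Hsp_cprod_summable_Suc[OF assms(2,3)]]
    by (simp add: distrib_right)
  then show ?thesis by (simp add: Bf_def vadd_def distrib_right)
qed

lemma Bf_smul_left:
  assumes "x \<in> Hsp" "z \<in> Hsp"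
  shows "Bf (smul c x) z = c * Bf x z"
proof -
  have "(\<Sum>n. c * x (Suc n) * cnj (z (Suc n))) = c * (\<Sum>n. x (Suc n) * cnj (z (Suc n)))"
    using suminf_mult[OF Hsp_cprod_summable_Suc[OF assms], of c] by (simp add: mult.assoc)
  then show ?thesis by (simp add: Bf_def smul_def algebra_simps)
qed

lemma Bf_herm:
  assumes "x \<in> Hsp" "y \<in> Hsp"
  shows "Bf y x = cnj (Bf x y)"
proof -
  have s: "(\<lambda>n. x (Suc n) * cnj (y (Suc n))) sums (\<Sum>n. x (Suc n) * cnj (y (Suc n)))"
    using Hsp_cprod_summable_Suc[OF assms] by (rule summable_sums)
  have "(\<lambda>n. cnj (x (Suc n) * cnj (y (Suc n)))) sums cnj (\<Sum>n. x (Suc n) * cnj (y (Suc n)))"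
    using s by (simp only: sums_cnj)
  moreover have "(\<lambda>n. cnj (x (Suc n) * cnj (y (Suc n)))) = (\<lambda>n. y (Suc n) * cnj (x (Suc n)))"
    by (simp add: mult_ac)
  ultimately have "(\<Sum>n. y (Suc n) * cnj (x (Suc n))) = cnj (\<Sum>n. x (Suc n) * cnj (y (Suc n)))"
    by (simp add: sums_iff)
  then show ?thesis by (simp add: Bf_def mult_ac)
qed

lemma Bf_vadd_right:
  assumes "x \<in> Hsp" "y \<in> Hsp" "z \<in> Hsp"
  shows "Bf z (vadd x y) = Bf z x + Bf z y"
proof -
  have "Bf z (vadd x y) = cnj (Bf (vadd x y) z)" using Bf_herm[OF Hsp_vadd[OF assms(1,2)] assms(3)] by simp
  also have "\<dots> = cnj (Bf x z) + cnj (Bf y z)" using Bf_vadd_left[OF assms] by simp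
  also have "\<dots> = Bf z x + Bf z y" using Bf_herm[OF assms(1,3)] Bf_herm[OF assms(2,3)] by simp
  finally show ?thesis .
qed

lemma Bf_smul_right:
  assumes "x \<in> Hsp" "z \<in> Hsp"
  shows "Bf z (smul c x) = cnj c * Bf z x"
proof -
  have "Bf z (smul c x) = cnj (Bf (smul c x) z)" using Bf_herm[OF Hsp_smul[OF assms(1)] assms(2)] by simp
  also have "\<dots> = cnj c * cnj (Bf x z)" using Bf_smul_left[OF assms] by simp
  also have "\<dots> = cnj c * Bf z x" using Bf_herm[OF assms] by simp
  finally show ?thesis .
qed

lemma Hsp_vsub: "x \<in> Hsp \<Longrightarrow> y \<in> Hsp \<Longrightarrow> vadd x (smul c y) \<in> Hsp"
  by (simp add: Hsp_vadd Hsp_smul)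

lemma Bf_expand:
  assumes "x \<in> Hsp" "y \<in> Hsp"
  shows "Bf (vadd x (smul c y)) (vadd x (smul c y)) =
         Bf x x + cnj c * Bf x y + c * Bf y x + c * cnj c * Bf y y"
proof -
  have xy: "smul c y \<in> Hsp" using assms Hsp_smul by blast
  have "Bf (vadd x (smul c y)) (vadd x (smul c y)) =
        Bf x (vadd x (smul c y)) + Bf (smul c y) (vadd x (smul c y))"
    using Bf_vadd_left[OF assms(1) xy Hsp_vadd[OF assms(1) xy]] .
  also have "\<dots> = Bf x x + Bf x (smul c y) + (Bf (smul c y) x + Bf (smul c y) (smul c y))"
    using Bf_vadd_right[OF assms(1) xy assms(1)] Bf_vadd_right[OF assms(1) xy xy] by simp
  also have "\<dots> = Bf x x + cnj c * Bf x y + (c * Bf y x + c * (cnj c * Bf y y))"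
    using Bf_smul_right[OF assms(2,1)] Bf_smul_left[OF assms(2,1)] Bf_smul_left[OF assms(2) xy]
      Bf_smul_right[OF assms(2,2)] by simp
  finally show ?thesis by (simp add: algebra_simps)
qed

lemma Bf_self_real: "x \<in> Hsp \<Longrightarrow> Bf x x = complex_of_real (Re (Bf x x))"
proof -
  assume h: "x \<in> Hsp"
  have "Bf x x = cnj (Bf x x)" using Bf_herm[OF h h] .
  then have "Im (Bf x x) = 0" by (metis cnj.sel(2) neg_equal_zero)
  then show ?thesis by (simp add: complex_eq_iff)
qed

lemma Bf_first_zero:
  assumes "x \<in> Hsp" "x 0 = 0"
  shows "Re (Bf x x) = - (\<Sum>n. (cmod (x (Suc n)))^2)"
proof -
  have sm: "summable (\<lambda>n. (cmod (x (Suc n)))^2)"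
    using Hsp_D[OF assms(1)] by (subst summable_Suc_iff)
  have "(\<lambda>n. x (Suc n) * cnj (x (Suc n))) = (\<lambda>n. complex_of_real ((cmod (x (Suc n)))^2))"
    by (simp add: complex_norm_square[symmetric])
  then have "(\<Sum>n. x (Suc n) * cnj (x (Suc n))) = complex_of_real (\<Sum>n. (cmod (x (Suc n)))^2)"
    using suminf_of_real[OF sm, symmetric] by (simp only:)
  then show ?thesis by (simp add: Bf_def assms(2))
qed

lemma semidef:
  assumes e: "e \<in> Hsp" "e \<noteq> (\<lambda>_. 0)" "Bf e e = 0"
    and w: "w \<in> Hsp" "Bf w e = 0"
  shows "Re (Bf w w) \<le> 0"
proof -
  have e0: "e 0 \<noteq> 0"
  proof
    assume h: "e 0 = 0"
    have sm: "summable (\<lambda>n. (cmod (e (Suc n)))^2)"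
      using Hsp_D[OF assms(1)] by (subst summable_Suc_iff)
    have "(\<Sum>n. (cmod (e (Suc n)))^2) = 0" using Bf_first_zero[OF e(1) h] e(3) by simp
    then have "\<forall>n. (cmod (e (Suc n)))^2 = 0" using suminf_eq_zero_iff[OF sm] by simp
    then have "\<forall>n. e n = 0" using h by (metis not0_implies_Suc norm_eq_zero power_eq_0_iff)
    then show False using e(2) by auto
  qed
  define k where "k = - (w 0 / e 0)"
  define u where "u = vadd w (smul k e)"
  have uH: "u \<in> Hsp" unfolding u_def using Hsp_vsub w(1) e(1) by blast
  have u0: "u 0 = 0" using e0 by (simp add: u_def vadd_def smul_def k_def)
  have "Bf u u = Bf w w"
    unfolding u_def using Bf_expand[OF w(1) e(1)] w(2) Bf_herm[OF w(1) e(1)] e(3) by simp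
  moreover have "Re (Bf u u) \<le> 0"
  proof -
    have "summable (\<lambda>n. (cmod (u (Suc n)))^2)"
      using Hsp_D[OF uH] by (subst summable_Suc_iff)
    then have "0 \<le> (\<Sum>n. (cmod (u (Suc n)))^2)" by (rule suminf_nonneg) simp
    then show ?thesis using Bf_first_zero[OF uH u0] by simp
  qed
  ultimately show ?thesis by simp
qed

lemma null_vanish:
  assumes e: "e \<in> Hsp" "e \<noteq> (\<lambda>_. 0)" "Bf e e = 0"
    and w: "w \<in> Hsp" "Bf w e = 0" "Bf w w = 0"
    and x: "x \<in> Hsp" "Bf x e = 0"
  shows "Bf w x = 0"
proof -
  define B where "B = Bf w x"
  define q where "q = Re (Bf x x)"
  define r where "r = 1 / (\<bar>q\<bar> + 1)"
  have r0: "r > 0" by (simp add: r_def)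
  have rq: "r * \<bar>q\<bar> < 1" unfolding r_def by (simp add: field_simps)
  define s where "s = complex_of_real r * B"
  have "Re (Bf (vadd w (smul s x)) (vadd w (smul s x))) \<le> 0"
  proof (rule semidef[OF e])
    show "vadd w (smul s x) \<in> Hsp" using Hsp_vsub w(1) x(1) by blast
    show "Bf (vadd w (smul s x)) e = 0"
      using Bf_vadd_left[OF w(1) Hsp_smul[OF x(1)] e(1)] Bf_smul_left[OF x(1) e(1)] w(2) x(2) by simp
  qed
  moreover have "Bf (vadd w (smul s x)) (vadd w (smul s x)) =
     cnj s * B + s * cnj B + s * cnj s * complex_of_real q"
    using Bf_expand[OF w(1) x(1), of s] w(3) Bf_herm[OF w(1) x(1)] Bf_self_real[OF x(1)]
    unfolding B_def q_def by simp
  moreover have "cnj s * B + s * cnj B + s * cnj s * complex_of_real q =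
     complex_of_real (2 * r * (cmod B)^2 + r * r * (cmod B)^2 * q)"
  proof -
    have c2: "B * cnj B = complex_of_real ((cmod B)^2)" by (rule complex_norm_square[symmetric])
    have c1: "cnj B * B = complex_of_real ((cmod B)^2)" using c2 by (simp add: ac_simps)
    have "cnj s * B = complex_of_real (r * (cmod B)^2)" unfolding s_def using c1
      by (simp add: mult.assoc)
    moreover have "s * cnj B = complex_of_real (r * (cmod B)^2)" unfolding s_def using c2
      by (simp add: mult.assoc)
    moreover have "s * cnj s = complex_of_real (r * r * (cmod B)^2)" unfolding s_def
    proof -
      have "complex_of_real r * B * cnj (complex_of_real r * B) = complex_of_real r * complex_of_real r * (B * cnj B)"
        by (simp add: ac_simps)
      then show "complex_of_real r * B * cnj (complex_of_real r * B) = complex_of_real (r * r * (cmod B)^2)"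
        using c2 by simp
    qed
    ultimately show ?thesis by simp
  qed
  ultimately have h: "2 * r * (cmod B)^2 + r * r * (cmod B)^2 * q \<le> 0" by simp
  have "r * q > -1" using rq r0 by (smt (verit) mult_minus_right abs_ge_minus_self mult_left_mono)
  then have "r * (cmod B)^2 * (2 + r * q) \<le> 0" using h by (simp add: algebra_simps)
  moreover have "2 + r * q > 0" using \<open>r * q > -1\<close> by simp
  ultimately have "(cmod B)^2 \<le> 0" using r0
    by (metis mult_le_0_iff not_le zero_less_mult_iff)
  then show ?thesis unfolding B_def by simp
qed

lemma unit_vec_Hsp: "(\<lambda>n. if n = k then (1::complex) else 0) \<in> Hsp"
proof -
  have "summable (\<lambda>n. if n = k then (1::real) else 0)"
    using sums_single[of k "\<lambda>_. (1::real)"] by (simp add: sums_iff)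
  moreover have "(\<lambda>n. (cmod (if n = k then (1::complex) else 0))^2) = (\<lambda>n. if n = k then (1::real) else 0)"
    by auto
  ultimately show ?thesis by (simp add: Hsp_def)
qed

lemma nondeg:
  assumes "w \<in> Hsp" "\<forall>x\<in>Hsp. Bf w x = 0"
  shows "w = (\<lambda>_. 0)"
proof
  fix k
  show "w k = 0"
  proof (cases k)
    case 0
    have "Bf w (\<lambda>n. if n = 0 then 1 else 0) = 0" using assms unit_vec_Hsp by blast
    then show ?thesis using 0 by (simp add: Bf_def)
  next
    case (Suc m)
    have "Bf w (\<lambda>n. if n = Suc m then 1 else 0) = 0" using assms unit_vec_Hsp by blast
    moreover have "(\<lambda>n. w (Suc n) * cnj (if Suc n = Suc m then 1 else 0)) = (\<lambda>n. if n = m then w (Suc m) else 0)"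
      by auto
    moreover have "(\<Sum>n. (if n = m then w (Suc m) else 0)) = w (Suc m)"
      using sums_single[of m "\<lambda>_. w (Suc m)"] by (simp add: sums_iff)
    ultimately show ?thesis using Suc by (simp add: Bf_def)
  qed
qed


lemma vanish:
  assumes e: "e \<in> Hsp" "e \<noteq> (\<lambda>_. 0)" "Bf e e = 0"
    and f: "f \<in> Hsp" "Bf e f = 1"
    and w: "w \<in> Hsp" "Bf w e = 0" "Bf w w = 0" "Bf w f = 0"
  shows "w = (\<lambda>_. 0)"
proof (rule nondeg[OF w(1)], intro ballI)
  fix x assume x: "x \<in> Hsp"
  have fe: "Bf f e = 1" using Bf_herm[OF e(1) f(1)] f(2) by simp
  define x' where "x' = vadd x (smul (- Bf x e) f)"
  have x'H: "x' \<in> Hsp" unfolding x'_def using Hsp_vsub x f(1) by blast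
  have "Bf x' e = 0"
    unfolding x'_def using Bf_vadd_left[OF x Hsp_smul[OF f(1)] e(1)] Bf_smul_left[OF f(1) e(1)] fe by simp
  then have "Bf w x' = 0" using null_vanish[OF e w(1,2,3) x'H] by blast
  moreover have "Bf w x' = Bf w x"
    unfolding x'_def using Bf_vadd_right[OF x Hsp_smul[OF f(1)] w(1)] Bf_smul_right[OF f(1) w(1)] w(4) by simp
  ultimately show "Bf w x = 0" by simp
qed

lemma Bf_bound:
  assumes x: "x \<in> Hsp" and y: "y \<in> Hsp" and s: "s > 0"
  shows "cmod (Bf x y) \<le> ((\<Sum>n. (cmod (x n))^2) / s + s * (\<Sum>n. (cmod (y n))^2)) / 2"
proof -
  have sp: "summable (\<lambda>n. cmod (x n) * cmod (y n))" by (rule Hsp_prod_summable[OF x y])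
  have sps: "summable (\<lambda>n. cmod (x (Suc n)) * cmod (y (Suc n)))" using sp by (subst summable_Suc_iff)
  have "cmod (\<Sum>n. x (Suc n) * cnj (y (Suc n))) \<le> (\<Sum>n. norm (x (Suc n) * cnj (y (Suc n))))"
    by (rule summable_norm) (simp add: norm_mult sps)
  also have "\<dots> = (\<Sum>n. cmod (x (Suc n)) * cmod (y (Suc n)))" by (simp add: norm_mult)
  also have "\<dots> = (\<Sum>n. cmod (x n) * cmod (y n)) - cmod (x 0) * cmod (y 0)"
    by (rule suminf_split_head[OF sp])
  finally have h1: "cmod (\<Sum>n. x (Suc n) * cnj (y (Suc n))) \<le> (\<Sum>n. cmod (x n) * cmod (y n)) - cmod (x 0) * cmod (y 0)" .
  have "cmod (Bf x y) \<le> cmod (x 0 * cnj (y 0)) + cmod (\<Sum>n. x (Suc n) * cnj (y (Suc n)))"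
    unfolding Bf_def by (rule norm_triangle_ineq4)
  also have "\<dots> \<le> (\<Sum>n. cmod (x n) * cmod (y n))" using h1 by (simp add: norm_mult)
  also have "\<dots> \<le> (\<Sum>n. ((cmod (x n))^2 / s + s * (cmod (y n))^2) / 2)"
  proof (rule suminf_le[OF _ sp])
    show "summable (\<lambda>n. ((cmod (x n))^2 / s + s * (cmod (y n))^2) / 2)"
      using Hsp_D[OF x] Hsp_D[OF y] by (intro summable_divide summable_add summable_mult)
    fix n
    have "0 \<le> (cmod (x n) - s * cmod (y n))^2" by simp
    then have "2 * s * (cmod (x n) * cmod (y n)) \<le> (cmod (x n))^2 + s * s * (cmod (y n))^2"
      by (simp add: power2_eq_square algebra_simps)
    then show "cmod (x n) * cmod (y n) \<le> ((cmod (x n))^2 / s + s * (cmod (y n))^2) / 2"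
      using s by (simp add: field_simps power2_eq_square)
  qed
  also have "\<dots> = ((\<Sum>n. (cmod (x n))^2) / s + s * (\<Sum>n. (cmod (y n))^2)) / 2"
  proof -
    have a: "summable (\<lambda>n. (cmod (x n))^2 / s)" using Hsp_D[OF x] by (rule summable_divide)
    have b: "summable (\<lambda>n. s * (cmod (y n))^2)" using Hsp_D[OF y] by (rule summable_mult)
    have "(\<Sum>n. ((cmod (x n))^2 / s + s * (cmod (y n))^2) / 2) = (\<Sum>n. (cmod (x n))^2 / s + s * (cmod (y n))^2) / 2"
      by (rule suminf_divide[OF summable_add[OF a b]])
    also have "\<dots> = ((\<Sum>n. (cmod (x n))^2 / s) + (\<Sum>n. s * (cmod (y n))^2)) / 2"
      using suminf_add[OF a b] by simp
    also have "\<dots> = ((\<Sum>n. (cmod (x n))^2) / s + s * (\<Sum>n. (cmod (y n))^2)) / 2"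
      using suminf_divide[OF Hsp_D[OF x], of s] suminf_mult[OF Hsp_D[OF y], of s] by simp
    finally show ?thesis .
  qed
  finally show ?thesis .
qed


definition Km :: "real \<Rightarrow> real \<Rightarrow> complex^2^2" where
  "Km l b = (\<chi> i j. if i = 1 then (if j = 1 then complex_of_real l else \<i> * complex_of_real b)
                               else (if j = 1 then 0 else complex_of_real (1 / l)))"

lemma gmat_Km: "gmat l b = Sxi ** Km l b ** Sxi"
  by (simp add: gmat_def Km_def)

lemma csqrt2: "complex_of_real (sqrt 2) * complex_of_real (sqrt 2) = 2"
proof -
  have "complex_of_real (sqrt 2 * sqrt 2) = complex_of_real 2" by simp
  then show ?thesis by (simp only: of_real_mult of_real_numeral)
qed

lemma Sxi_Sxi: "Sxi ** Sxi = mat 1"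
proof -
  have h: "complex_of_real (1 / sqrt 2) * complex_of_real (1 / sqrt 2) = 1 / 2"
  proof -
    have r: "1 / sqrt 2 * (1 / sqrt 2) = (1/2::real)" by (simp add: field_simps)
    have "complex_of_real (1 / sqrt 2 * (1 / sqrt 2)) = complex_of_real (1/2)" using r by (simp only:)
    then show ?thesis by (simp only: of_real_mult of_real_divide of_real_1 of_real_numeral)
  qed
  show ?thesis
    by (simp add: vec_eq_iff forall_2 sum_2 matrix_matrix_mult_def Sxi_def mat_def h csqrt2)
qed

lemma Km_mult:
  assumes "l \<noteq> 0" "l' \<noteq> 0"
  shows "Km l b ** Km l' b' = Km (l * l') (l * b' + b / l')"
  using assms by (simp add: vec_eq_iff forall_2 sum_2 matrix_matrix_mult_def Km_def field_simps)

lemma gmat_mult: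
  assumes "l \<noteq> 0" "l' \<noteq> 0"
  shows "gmat l b ** gmat l' b' = gmat (l * l') (l * b' + b / l')"
proof -
  have "gmat l b ** gmat l' b' = Sxi ** Km l b ** (Sxi ** Sxi) ** Km l' b' ** Sxi"
    by (simp add: gmat_Km matrix_mul_assoc)
  also have "\<dots> = Sxi ** (Km l b ** Km l' b') ** Sxi"
    by (simp add: Sxi_Sxi matrix_mul_assoc)
  finally show ?thesis using Km_mult[OF assms] by (simp add: gmat_Km)
qed

lemma gmat_id: "gmat 1 0 = mat 1"
proof -
  have "Km 1 0 = mat 1" by (simp add: vec_eq_iff forall_2 Km_def mat_def)
  then show ?thesis by (simp add: gmat_Km Sxi_Sxi)
qed

lemma gmat_1b: "gmat 1 b = (\<chi> i j. (if i = j then 1 else 0) + (if j = 1 then 1 else -1) * (\<i> * complex_of_real b / 2))"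
proof -
  have h: "complex_of_real (1 / sqrt 2) * complex_of_real (1 / sqrt 2) = 1 / 2"
  proof -
    have r: "1 / sqrt 2 * (1 / sqrt 2) = (1/2::real)" by (simp add: field_simps)
    have "complex_of_real (1 / sqrt 2 * (1 / sqrt 2)) = complex_of_real (1/2)" using r by (simp only:)
    then show ?thesis by (simp only: of_real_mult of_real_divide of_real_1 of_real_numeral)
  qed
  show ?thesis
    by (simp add: gmat_Km vec_eq_iff forall_2 sum_2 matrix_matrix_mult_def Sxi_def Km_def algebra_simps h csqrt2)
qed

lemma norm_le_l1_gen: "norm (x :: 'a::real_normed_vector^'n) \<le> (\<Sum>i\<in>UNIV. norm (x $ i))"
  unfolding norm_vec_def by (rule L2_set_le_sum) simp

lemma dist_gmat: "dist (gmat 1 b) (gmat 1 0) \<le> 2 * \<bar>b\<bar>"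
proof -
  have "gmat 1 b - gmat 1 0 = (\<chi> i j. (if j = 1 then 1 else -1) * (\<i> * complex_of_real b / 2))"
    by (simp add: gmat_1b vec_eq_iff)
  moreover have "norm (\<chi> (i::2) (j::2). (if j = 1 then 1 else -1) * (\<i> * complex_of_real b / 2)) \<le> 2 * \<bar>b\<bar>"
  proof -
    let ?M = "\<chi> (i::2) (j::2). (if j = 1 then 1 else -1) * (\<i> * complex_of_real b / 2)"
    have r: "norm (?M $ i) \<le> \<bar>b\<bar>" for i
    proof -
      have "norm (?M $ i) \<le> (\<Sum>j\<in>UNIV. norm (?M $ i $ j))" by (rule norm_le_l1_gen)
      also have "\<dots> = \<bar>b\<bar>" by (simp add: sum_2 norm_mult norm_divide)
      finally show ?thesis .
    qed
    have "norm ?M \<le> (\<Sum>i\<in>UNIV. norm (?M $ i))" by (rule norm_le_l1_gen)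
    also have "\<dots> \<le> 2 * \<bar>b\<bar>" using r[of 1] r[of 2] by (simp add: sum_2)
    finally show ?thesis .
  qed
  ultimately show ?thesis by (simp add: dist_norm)
qed


lemma smul_smul: "smul a (smul b x) = smul (a * b) x"
  by (simp add: smul_def mult.assoc)

lemma smul_one: "smul 1 x = x"
  by (simp add: smul_def)

lemma smul_cancel: "m \<noteq> 0 \<Longrightarrow> smul m x = smul m y \<Longrightarrow> x = y"
  by (metis smul_smul smul_one field_class.field_inverse mult.commute)

lemma in_cline: "x \<in> cline x"
  unfolding cline_def using smul_one by (metis (mono_tags, lifting) mem_Collect_eq)

lemma cline_lines: "x \<in> Hsp \<Longrightarrow> x \<noteq> (\<lambda>_. 0) \<Longrightarrow> cline x \<in> lines"
  unfolding lines_def by blast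

lemma cline_bdry:
  assumes "x \<in> Hsp" "x \<noteq> (\<lambda>_. 0)" "Bf x x = 0"
  shows "cline x \<in> bdry_points"
proof -
  have ex: "\<exists>v. v \<in> cline x \<and> v \<noteq> (\<lambda>_. 0)" using in_cline assms(2) by blast
  have "lrep (cline x) \<in> cline x" unfolding lrep_def using someI_ex[OF ex] by blast
  then obtain c where c: "lrep (cline x) = smul c x" unfolding cline_def by blast
  have "Qf (lrep (cline x)) = 0"
    unfolding c Qf_def using Bf_smul_left[OF assms(1) Hsp_smul[OF assms(1)]] Bf_smul_right[OF assms(1) assms(1)] assms(3)
    by simp
  then show ?thesis unfolding bdry_points_def using cline_lines[OF assms(1,2)] by blast
qed

lemma cline_image:
  assumes "\<forall>c. T (smul c x) = smul c (T x)" "T x = smul m x" "m \<noteq> 0"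
  shows "T ` cline x = cline x"
proof
  show "T ` cline x \<subseteq> cline x"
    unfolding cline_def using assms(1,2) smul_smul by auto
  show "cline x \<subseteq> T ` cline x"
  proof
    fix y assume "y \<in> cline x"
    then obtain c where y: "y = smul c x" unfolding cline_def by blast
    have "T (smul (c / m) x) = y" using assms y smul_smul by simp
    moreover have "smul (c / m) x \<in> cline x" unfolding cline_def by blast
    ultimately show "y \<in> T ` cline x" by blast
  qed
qed

lemma Bf_expand2:
  assumes "x \<in> Hsp" "y \<in> Hsp" "z \<in> Hsp"
  shows "Bf (vadd x (smul c z)) (vadd y (smul c z)) =
         Bf x y + cnj c * Bf x z + c * Bf z y + c * cnj c * Bf z z"
proof -
  have zz: "smul c z \<in> Hsp" using assms Hsp_smul by blast
  have "Bf (vadd x (smul c z)) (vadd y (smul c z)) =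
        Bf x (vadd y (smul c z)) + Bf (smul c z) (vadd y (smul c z))"
    using Bf_vadd_left[OF assms(1) zz Hsp_vadd[OF assms(2) zz]] .
  also have "\<dots> = Bf x y + Bf x (smul c z) + (Bf (smul c z) y + Bf (smul c z) (smul c z))"
    using Bf_vadd_right[OF assms(2) zz assms(1)] Bf_vadd_right[OF assms(2) zz zz] by simp
  also have "\<dots> = Bf x y + cnj c * Bf x z + (c * Bf z y + c * (cnj c * Bf z z))"
    using Bf_smul_right[OF assms(3,1)] Bf_smul_left[OF assms(3,2)] Bf_smul_left[OF assms(3) zz]
      Bf_smul_right[OF assms(3,3)] by simp
  finally show ?thesis by (simp add: algebra_simps)
qed

theorem mainTheorem12:
  fixes \<rho> :: "complex^2^2 \<Rightarrow> vec set \<Rightarrow> vec set"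
    and \<sigma> :: "complex^2^2 \<Rightarrow> vec \<Rightarrow> vec"
    and \<eta>1 \<eta>2 :: vec and t :: real
  assumes rep: "is_rep \<rho>" and irr: "irreducible_rep \<rho>"
    \<comment> \<open>eta1: isotropic representative of the unique common fixed boundary point of rho(P)\<close>
    and eta1: "\<eta>1 \<in> Hsp" "\<eta>1 \<noteq> (\<lambda>_. 0)" "Bf \<eta>1 \<eta>1 = 0"
    and eta1_fix: "\<forall>p\<in>Pgrp. \<rho> p (cline \<eta>1) = cline \<eta>1"
    and eta1_uniq: "\<forall>L\<in>bdry_points. (\<forall>p\<in>Pgrp. \<rho> p L = L) \<longrightarrow> L = cline \<eta>1"
    \<comment> \<open>eta2: isotropic representative of the other endpoint of the common axis\<close>
    and eta2: "\<eta>2 \<in> Hsp" "\<eta>2 \<noteq> (\<lambda>_. 0)" "Bf \<eta>2 \<eta>2 = 0"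
    and eta2_fix: "\<forall>l>0. \<rho> (gmat l 0) (cline \<eta>2) = cline \<eta>2"
    and eta2_ne: "cline \<eta>2 \<noteq> cline \<eta>1"
    and norm12: "Bf \<eta>1 \<eta>2 = 1"
    \<comment> \<open>sigma: continuous lift of rho restricted to P into U(B), normalized\<close>
    and lift_U: "\<forall>p\<in>Pgrp. unitaryB (\<sigma> p)"
    and lift_hom: "\<forall>p\<in>Pgrp. \<forall>q\<in>Pgrp. \<forall>v\<in>Hsp. \<sigma> (p ** q) v = \<sigma> p (\<sigma> q v)"
    and lift_cont: "\<forall>v\<in>Hsp. \<forall>p0\<in>Pgrp. \<forall>\<epsilon>>0. \<exists>\<delta>>0. \<forall>p\<in>Pgrp.
                      dist p p0 < \<delta> \<longrightarrow> l2dist (\<sigma> p v) (\<sigma> p0 v) < \<epsilon>"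
    and lift_rho: "\<forall>p\<in>Pgrp. \<forall>L\<in>lines. \<rho> p L = \<sigma> p ` L"
    and lift_pos: "\<forall>p\<in>Pgrp. Bf (\<sigma> p \<eta>1) \<eta>2 \<in> \<real> \<and> Re (Bf (\<sigma> p \<eta>1) \<eta>2) > 0"
    \<comment> \<open>chi(lambda) = lambda^t\<close>
    and chi: "\<forall>l>0. \<sigma> (gmat l 0) \<eta>1 = smul (complex_of_real (l powr t)) \<eta>1"
  shows "0 < t \<and> t \<le> 2"
proof -
  have P: "\<And>l b. l > 0 \<Longrightarrow> gmat l b \<in> Pgrp" by (auto simp: Pgrp_def)
  have sH: "\<And>p x. p \<in> Pgrp \<Longrightarrow> x \<in> Hsp \<Longrightarrow> \<sigma> p x \<in> Hsp"
    using lift_U unfolding unitaryB_def by blast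
  have sB: "\<And>p x y. p \<in> Pgrp \<Longrightarrow> x \<in> Hsp \<Longrightarrow> y \<in> Hsp \<Longrightarrow> Bf (\<sigma> p x) (\<sigma> p y) = Bf x y"
    using lift_U unfolding unitaryB_def by blast
  have sS: "\<And>p c x. p \<in> Pgrp \<Longrightarrow> x \<in> Hsp \<Longrightarrow> \<sigma> p (smul c x) = smul c (\<sigma> p x)"
    using lift_U unfolding unitaryB_def by blast
  have sI: "\<And>p. p \<in> Pgrp \<Longrightarrow> inj_on (\<sigma> p) Hsp"
    using lift_U unfolding unitaryB_def by blast
  have I1: "mat 1 \<in> Pgrp" using P[of 1 0] gmat_id by simp
  have Id: "\<And>x. x \<in> Hsp \<Longrightarrow> \<sigma> (mat 1) x = x"
  proof -
    fix x assume x: "x \<in> Hsp"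
    have "\<sigma> (mat 1 ** mat 1) x = \<sigma> (mat 1) (\<sigma> (mat 1) x)"
      using lift_hom I1 x by blast
    then have "\<sigma> (mat 1) (\<sigma> (mat 1) x) = \<sigma> (mat 1) x" by (simp add: matrix_mul_lid)
    then show "\<sigma> (mat 1) x = x" using inj_onD[OF sI[OF I1]] sH[OF I1 x] x by blast
  qed
  have comp: "\<And>l b l' b' x. l > 0 \<Longrightarrow> l' > 0 \<Longrightarrow> x \<in> Hsp \<Longrightarrow>
      \<sigma> (gmat (l * l') (l * b' + b / l')) x = \<sigma> (gmat l b) (\<sigma> (gmat l' b') x)"
  proof -
    fix l b l' b' x assume h: "(l::real) > 0" "(l'::real) > 0" "x \<in> Hsp"
    have "\<sigma> (gmat l b ** gmat l' b') x = \<sigma> (gmat l b) (\<sigma> (gmat l' b') x)"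
      using lift_hom P h by blast
    then show "\<sigma> (gmat (l * l') (l * b' + b / l')) x = \<sigma> (gmat l b) (\<sigma> (gmat l' b') x)"
      using gmat_mult[of l l' b b'] h by simp
  qed
  have fixline: "\<And>p x. p \<in> Pgrp \<Longrightarrow> \<rho> p (cline x) = cline x \<Longrightarrow> x \<in> Hsp \<Longrightarrow> x \<noteq> (\<lambda>_. 0) \<Longrightarrow>
      \<exists>c. \<sigma> p x = smul c x"
  proof -
    fix p x assume h: "p \<in> Pgrp" "\<rho> p (cline x) = cline x" "x \<in> Hsp" "x \<noteq> (\<lambda>_. 0)"
    have "cline x \<in> lines" by (rule cline_lines[OF h(3,4)])
    then have "\<rho> p (cline x) = \<sigma> p ` cline x" using lift_rho h(1) by blast
    then have "\<sigma> p ` cline x = cline x" using h(2) by simp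
    then have "\<sigma> p x \<in> cline x" using in_cline by blast
    then show "\<exists>c. \<sigma> p x = smul c x" unfolding cline_def by blast
  qed
  have e21: "Bf \<eta>2 \<eta>1 = 1" using Bf_herm[OF eta1(1) eta2(1)] norm12 by simp
  have F2: "\<And>l. l > 0 \<Longrightarrow> \<sigma> (gmat l 0) \<eta>2 = smul (complex_of_real (l powr - t)) \<eta>2"
  proof -
    fix l :: real assume l: "l > 0"
    obtain \<mu> where mu: "\<sigma> (gmat l 0) \<eta>2 = smul \<mu> \<eta>2"
      using fixline[OF P[OF l] _ eta2(1,2)] eta2_fix l by blast
    have "1 = Bf (\<sigma> (gmat l 0) \<eta>1) (\<sigma> (gmat l 0) \<eta>2)" using sB[OF P[OF l] eta1(1) eta2(1)] norm12 by simp
    also have "\<dots> = complex_of_real (l powr t) * cnj \<mu>"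
      using chi l mu Bf_smul_left[OF eta1(1) Hsp_smul[OF eta2(1)]] Bf_smul_right[OF eta2(1) eta1(1)] norm12
      by simp
    finally have eq: "1 = complex_of_real (l powr t) * cnj \<mu>" .
    have L0: "complex_of_real (l powr t) \<noteq> 0" using l by simp
    have "cnj \<mu> = 1 / complex_of_real (l powr t)" using eq L0 by (simp add: field_simps)
    then have "cnj (cnj \<mu>) = cnj (1 / complex_of_real (l powr t))" by simp
    then have "\<mu> = 1 / complex_of_real (l powr t)" by simp
    then have "\<mu> = complex_of_real (l powr - t)" by (simp add: powr_minus divide_inverse)
    then show "\<sigma> (gmat l 0) \<eta>2 = smul (complex_of_real (l powr - t)) \<eta>2" using mu by simp
  qed
  have Sc: "\<And>l b x. l > 0 \<Longrightarrow> x \<in> Hsp \<Longrightarrow>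
      \<sigma> (gmat l 0) (\<sigma> (gmat 1 b) x) = \<sigma> (gmat 1 (l * l * b)) (\<sigma> (gmat l 0) x)"
  proof -
    fix l b :: real and x assume h: "l > 0" "x \<in> Hsp"
    have "\<sigma> (gmat l 0) (\<sigma> (gmat 1 b) x) = \<sigma> (gmat (l * 1) (l * b + 0 / 1)) x"
      using comp[where l=l and b=0 and l'=1 and b'=b and x=x] h by simp
    also have "\<dots> = \<sigma> (gmat (1 * l) (1 * 0 + l * l * b / l)) x" using h by simp
    also have "\<dots> = \<sigma> (gmat 1 (l * l * b)) (\<sigma> (gmat l 0) x)"
      using comp[where l=1 and b="l * l * b" and l'=l and b'=0 and x=x] h by simp
    finally show "\<sigma> (gmat l 0) (\<sigma> (gmat 1 b) x) = \<sigma> (gmat 1 (l * l * b)) (\<sigma> (gmat l 0) x)" .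
  qed
  define cc where "cc b = Bf (\<sigma> (gmat 1 b) \<eta>1) \<eta>2" for b
  have P1: "\<And>b. gmat 1 b \<in> Pgrp" using P by simp
  have ccU: "\<And>b. \<sigma> (gmat 1 b) \<eta>1 = smul (cc b) \<eta>1"
  proof -
    fix b
    obtain c where c: "\<sigma> (gmat 1 b) \<eta>1 = smul c \<eta>1"
      using fixline[OF P1 _ eta1(1,2)] eta1_fix P1 by blast
    have "cc b = c" unfolding cc_def c using Bf_smul_left[OF eta1(1) eta2(1)] norm12 by simp
    then show "\<sigma> (gmat 1 b) \<eta>1 = smul (cc b) \<eta>1" using c by simp
  qed
  have cc0: "\<And>b. cc b \<noteq> 0"
  proof -
    fix b
    have "0 < Re (cc b)" unfolding cc_def using lift_pos P1 by blast
    then show "cc b \<noteq> 0" by auto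
  qed
  have Bfs: "\<And>a. Bf (smul a \<eta>1) \<eta>2 = a" using Bf_smul_left[OF eta1(1) eta2(1)] norm12 by simp
  have ccadd: "\<And>b b'. cc (b + b') = cc b' * cc b"
  proof -
    fix b b' :: real
    have "\<sigma> (gmat 1 (b + b')) \<eta>1 = \<sigma> (gmat (1 * 1) (1 * b' + b / 1)) \<eta>1" by (simp add: add.commute)
    also have "\<dots> = \<sigma> (gmat 1 b) (\<sigma> (gmat 1 b') \<eta>1)"
      using comp[where l=1 and b=b and l'=1 and b'=b' and x=\<eta>1] eta1(1) by simp
    also have "\<dots> = smul (cc b') (smul (cc b) \<eta>1)" using ccU sS[OF P1 eta1(1)] by simp
    finally have "\<sigma> (gmat 1 (b + b')) \<eta>1 = smul (cc b' * cc b) \<eta>1" by (simp add: smul_smul)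
    then show "cc (b + b') = cc b' * cc b" using ccU Bfs by metis
  qed
  have s2: "sqrt 2 > (0::real)" by simp
  have ccsc: "\<And>b. cc (2 * b) = cc b"
  proof -
    fix b :: real
    define L where "L = complex_of_real (sqrt 2 powr t)"
    have L0: "L \<noteq> 0" unfolding L_def by simp
    have A1: "\<sigma> (gmat (sqrt 2) 0) \<eta>1 = smul L \<eta>1" using chi s2 unfolding L_def by blast
    have "\<sigma> (gmat (sqrt 2) 0) (\<sigma> (gmat 1 b) \<eta>1) = smul (cc b) (smul L \<eta>1)"
      using ccU sS[OF P[OF s2] eta1(1)] A1 by simp
    moreover have "\<sigma> (gmat (sqrt 2) 0) (\<sigma> (gmat 1 b) \<eta>1) = \<sigma> (gmat 1 (2 * b)) (\<sigma> (gmat (sqrt 2) 0) \<eta>1)"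
      using Sc[OF s2 eta1(1), of b] by simp
    moreover have "\<dots> = smul L (smul (cc (2 * b)) \<eta>1)"
      using A1 sS[OF P1 eta1(1)] ccU by simp
    ultimately have "smul (cc b * L) \<eta>1 = smul (L * cc (2 * b)) \<eta>1" by (simp add: smul_smul)
    then have "cc b * L = L * cc (2 * b)" using Bfs by metis
    then show "cc (2 * b) = cc b" using L0 by simp
  qed
  have cc1: "cc 1 = 1"
  proof -
    have "cc 1 * cc 1 = cc 1" using ccadd[of 1 1] ccsc[of 1] by simp
    then show ?thesis using cc0[of 1] by simp
  qed
  have ccm1: "cc (-1) = 1"
  proof -
    have "cc (-1) * cc (-1) = cc (-1)" using ccadd[of "-1" "-1"] ccsc[of "-1"] by simp
    then show ?thesis using cc0[of "-1"] by simp
  qed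
  have U1e: "\<sigma> (gmat 1 1) \<eta>1 = \<eta>1" using ccU[of 1] cc1 smul_one by simp
  have Um1e: "\<sigma> (gmat 1 (-1)) \<eta>1 = \<eta>1" using ccU[of "-1"] ccm1 smul_one by simp
  define v where "v b = \<sigma> (gmat 1 b) \<eta>2" for b
  define f where "f b = Bf (v b) \<eta>2" for b
  have vH: "\<And>b. v b \<in> Hsp" unfolding v_def using sH[OF P1 eta2(1)] .
  have F3: "\<And>b. f (2 * b) = complex_of_real (2 powr t) * f b"
  proof -
    fix b :: real
    define m where "m = complex_of_real (sqrt 2 powr - t)"
    have A2: "\<sigma> (gmat (sqrt 2) 0) \<eta>2 = smul m \<eta>2" using F2[OF s2] unfolding m_def .
    have "\<sigma> (gmat (sqrt 2) 0) (v b) = \<sigma> (gmat 1 (2 * b)) (\<sigma> (gmat (sqrt 2) 0) \<eta>2)"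
      unfolding v_def using Sc[OF s2 eta2(1), of b] by simp
    also have "\<dots> = smul m (v (2 * b))" unfolding v_def using A2 sS[OF P1 eta2(1)] by simp
    finally have Av: "\<sigma> (gmat (sqrt 2) 0) (v b) = smul m (v (2 * b))" .
    have "f b = Bf (\<sigma> (gmat (sqrt 2) 0) (v b)) (\<sigma> (gmat (sqrt 2) 0) \<eta>2)"
      unfolding f_def using sB[OF P[OF s2] vH eta2(1)] by simp
    also have "\<dots> = m * cnj m * f (2 * b)"
      unfolding Av A2 f_def using Bf_smul_left[OF vH Hsp_smul[OF eta2(1)]] Bf_smul_right[OF eta2(1) vH]
      by simp
    also have "m * cnj m = complex_of_real (2 powr - t)"
    proof -
      have "(sqrt 2 * sqrt 2) powr - t = sqrt 2 powr - t * sqrt 2 powr - t"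
        by (rule powr_mult)
      moreover have "sqrt 2 * sqrt 2 = (2::real)" by simp
      ultimately have "sqrt 2 powr - t * sqrt 2 powr - t = 2 powr - t" by simp
      then show ?thesis unfolding m_def by (metis complex_cnj_complex_of_real of_real_mult)
    qed
    finally have "f b = complex_of_real (2 powr - t) * f (2 * b)" .
    moreover have "complex_of_real (2 powr t) * complex_of_real (2 powr - t) = 1"
      by (simp flip: of_real_mult add: powr_add[symmetric])
    ultimately show "f (2 * b) = complex_of_real (2 powr t) * f b"
      by (metis mult.assoc mult_1)
  qed
  have vv: "\<And>b. Bf (v b) (v b) = 0" unfolding v_def using sB[OF P1 eta2(1) eta2(1)] eta2(3) by simp
  have ev: "\<And>b. Bf \<eta>2 (v b) = cnj (f b)" unfolding f_def using Bf_herm[OF vH eta2(1)] by simp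
  have v1e: "Bf (v 1) \<eta>1 = 1"
    using sB[OF P1 eta2(1) eta1(1), of 1] U1e e21 unfolding v_def by simp
  have vm1e: "Bf (v (-1)) \<eta>1 = 1"
    using sB[OF P1 eta2(1) eta1(1), of "-1"] Um1e e21 unfolding v_def by simp
  have fm1: "f (-1) = cnj (f 1)"
  proof -
    have "\<sigma> (gmat (1 * 1) (1 * 1 + -1 / 1)) \<eta>2 = \<sigma> (gmat 1 (-1)) (v 1)"
      unfolding v_def using comp[where l=1 and b="-1" and l'=1 and b'=1 and x=\<eta>2] eta2(1) by simp
    then have h: "\<sigma> (gmat 1 (-1)) (v 1) = \<eta>2" using Id[OF eta2(1)] gmat_id by simp
    have "f (-1) = Bf (\<sigma> (gmat 1 (-1)) \<eta>2) (\<sigma> (gmat 1 (-1)) (v 1))"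
      unfolding f_def h by (simp add: v_def)
    also have "\<dots> = Bf \<eta>2 (v 1)" using sB[OF P1 eta2(1) vH] by simp
    finally show ?thesis using ev by simp
  qed
  have v1vm1: "Bf (v 1) (v (-1)) = cnj (f (-2))"
  proof -
    have "\<sigma> (gmat (1 * 1) (1 * (-2) + 1 / 1)) \<eta>2 = \<sigma> (gmat 1 1) (v (-2))"
      unfolding v_def using comp[where l=1 and b=1 and l'=1 and b'="-2" and x=\<eta>2] eta2(1) by simp
    then have h: "v (-1) = \<sigma> (gmat 1 1) (v (-2))" by (simp add: v_def)
    have "Bf (v 1) (v (-1)) = Bf (\<sigma> (gmat 1 1) \<eta>2) (\<sigma> (gmat 1 1) (v (-2)))"
      unfolding h by (simp add: v_def)
    also have "\<dots> = Bf \<eta>2 (v (-2))" using sB[OF P1 eta2(1) vH] by simp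
    finally show ?thesis using ev by simp
  qed
  define \<alpha> where "\<alpha> = f 1"
  define T where "T = complex_of_real (2 powr t)"
  have fm2: "f (-2) = T * cnj \<alpha>" using F3[of "-1"] fm1 unfolding T_def \<alpha>_def by simp
  define w1 where "w1 = vadd (v 1) (smul (-1) \<eta>2)"
  define w2 where "w2 = vadd (v (-1)) (smul (-1) \<eta>2)"
  have w1H: "w1 \<in> Hsp" unfolding w1_def using Hsp_vsub vH eta2(1) by blast
  have w2H: "w2 \<in> Hsp" unfolding w2_def using Hsp_vsub vH eta2(1) by blast
  have w1e: "Bf w1 \<eta>1 = 0" unfolding w1_def
    using Bf_vadd_left[OF vH Hsp_smul[OF eta2(1)] eta1(1)] Bf_smul_left[OF eta2(1) eta1(1)] v1e e21 by simp
  have w2e: "Bf w2 \<eta>1 = 0" unfolding w2_def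
    using Bf_vadd_left[OF vH Hsp_smul[OF eta2(1)] eta1(1)] Bf_smul_left[OF eta2(1) eta1(1)] vm1e e21 by simp
  have w1f: "Bf w1 \<eta>2 = \<alpha>" unfolding w1_def \<alpha>_def
    using Bf_vadd_left[OF vH Hsp_smul[OF eta2(1)] eta2(1)] Bf_smul_left[OF eta2(1) eta2(1)] eta2(3)
    unfolding f_def by simp
  have w2f: "Bf w2 \<eta>2 = cnj \<alpha>" unfolding w2_def \<alpha>_def
    using Bf_vadd_left[OF vH Hsp_smul[OF eta2(1)] eta2(1)] Bf_smul_left[OF eta2(1) eta2(1)] eta2(3) fm1
    unfolding f_def by simp
  have w1w1: "Bf w1 w1 = - \<alpha> - cnj \<alpha>" unfolding w1_def
    using Bf_expand[OF vH eta2(1), of 1 "-1"] vv ev eta2(3) unfolding \<alpha>_def f_def by simp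
  have w2w2: "Bf w2 w2 = - cnj \<alpha> - \<alpha>" unfolding w2_def
    using Bf_expand[OF vH eta2(1), of "-1" "-1"] vv ev eta2(3) fm1 unfolding \<alpha>_def f_def by simp
  have cT: "cnj T = T" unfolding T_def by simp
  have w1w2: "Bf w1 w2 = T * \<alpha> - 2 * \<alpha>" unfolding w1_def w2_def
    using Bf_expand2[OF vH vH eta2(1), of 1 "-1" "-1"] v1vm1 fm2 ev fm1 eta2(3) cT
    unfolding \<alpha>_def f_def by simp
  have w2w1: "Bf w2 w1 = cnj (T * \<alpha> - 2 * \<alpha>)" using Bf_herm[OF w1H w2H] w1w2 by simp
  have Rea: "Re \<alpha> \<ge> 0" using semidef[OF eta1 w1H w1e] w1w1 by simp
  have le2: "Re \<alpha> > 0 \<Longrightarrow> t \<le> 2"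
  proof -
    assume a: "Re \<alpha> > 0"
    define u where "u = vadd w1 w2"
    have uH: "u \<in> Hsp" unfolding u_def using Hsp_vadd w1H w2H by blast
    have ue: "Bf u \<eta>1 = 0" unfolding u_def using Bf_vadd_left[OF w1H w2H eta1(1)] w1e w2e by simp
    have "Bf u u = Bf w1 w1 + Bf w1 w2 + (Bf w2 w1 + Bf w2 w2)"
      unfolding u_def using Bf_vadd_left[OF w1H w2H uH[unfolded u_def]]
        Bf_vadd_right[OF w1H w2H w1H] Bf_vadd_right[OF w1H w2H w2H] by simp
    then have "Re (Bf u u) = 2 * (2 powr t) * Re \<alpha> - 8 * Re \<alpha>"
      using w1w1 w1w2 w2w1 w2w2 unfolding T_def by simp
    then have "2 * (2 powr t) * Re \<alpha> - 8 * Re \<alpha> \<le> 0" using semidef[OF eta1 uH ue] by simp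
    then have "(2 powr t - 4) * Re \<alpha> \<le> 0" by (simp add: algebra_simps)
    then have "2 powr t \<le> 4" using a by (simp add: mult_le_0_iff)
    show "t \<le> 2"
    proof (rule ccontr)
      assume "\<not> t \<le> 2"
      then have "(2::real) powr 2 < 2 powr t" by (intro powr_less_mono) auto
      then show False using \<open>2 powr t \<le> 4\<close> by simp
    qed
  qed
  have gt0: "Re \<alpha> > 0 \<Longrightarrow> t > 0"
  proof (rule ccontr)
    assume a: "Re \<alpha> > 0" and nt: "\<not> t > 0"
    have p1: "2 powr t \<le> (1::real)"
    proof -
      have "(2::real) powr t \<le> 2 powr 0" using nt by (intro powr_mono) auto
      then show ?thesis by simp
    qed
    have big: "cmod \<alpha> \<le> cmod (f ((1/2)^n))" for n
    proof (induction n)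
      case 0
      then show ?case unfolding \<alpha>_def by simp
    next
      case (Suc n)
      have "f (2 * (1/2)^(Suc n)) = T * f ((1/2)^(Suc n))" using F3 unfolding T_def by blast
      then have "f ((1/2)^n) = T * f ((1/2)^(Suc n))" by simp
      then have "cmod (f ((1/2)^n)) = 2 powr t * cmod (f ((1/2)^(Suc n)))"
        unfolding T_def by (simp add: norm_mult)
      also have "\<dots> \<le> cmod (f ((1/2)^(Suc n)))"
        using p1 mult_right_mono[OF p1 norm_ge_zero[of "f ((1/2)^(Suc n))"]] by simp
      finally show ?case using Suc by simp
    qed
    define a0 where "a0 = cmod \<alpha>"
    have a0: "a0 > 0" unfolding a0_def using a by (metis zero_complex.sel(1) norm_le_zero_iff not_le order.refl)
    define Y where "Y = (\<Sum>n. (cmod (\<eta>2 n))^2)"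
    have Y0: "Y \<ge> 0" unfolding Y_def by (rule suminf_nonneg[OF Hsp_D[OF eta2(1)]]) simp
    define s where "s = a0 / (Y + 1)"
    have s0: "s > 0" unfolding s_def using a0 Y0 by simp
    define e where "e = sqrt (s * a0)"
    have e0: "e > 0" unfolding e_def using s0 a0 by simp
    obtain \<delta> where d0: "\<delta> > 0" and d: "\<forall>p\<in>Pgrp. dist p (gmat 1 0) < \<delta> \<longrightarrow>
        l2dist (\<sigma> p \<eta>2) (\<sigma> (gmat 1 0) \<eta>2) < e"
      using lift_cont eta2(1) P1[of 0] e0 by blast
    obtain n where n: "(1/2::real)^n < \<delta> / 2" using real_arch_pow_inv[of "\<delta>/2" "1/2"] d0 by auto
    define b where "b = (1/2::real)^n"
    have "dist (gmat 1 b) (gmat 1 0) \<le> 2 * \<bar>b\<bar>" by (rule dist_gmat)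
    also have "\<dots> < \<delta>" using n unfolding b_def by simp
    finally have "l2dist (v b) \<eta>2 < e"
      using d P1[of b] Id[OF eta2(1)] gmat_id unfolding v_def by auto
    define x where "x = vadd (v b) (smul (-1) \<eta>2)"
    have xH: "x \<in> Hsp" unfolding x_def using Hsp_vsub vH eta2(1) by blast
    have xn: "(\<lambda>n. v b n - \<eta>2 n) = x" unfolding x_def vadd_def smul_def by simp
    define X where "X = (\<Sum>n. (cmod (x n))^2)"
    have "sqrt X < sqrt (s * a0)" using \<open>l2dist (v b) \<eta>2 < e\<close>
      unfolding l2dist_def l2norm_def xn X_def e_def .
    then have Xs: "X < s * a0" by simp
    have fx: "f b = Bf x \<eta>2" unfolding x_def f_def
      using Bf_vadd_left[OF vH Hsp_smul[OF eta2(1)] eta2(1)] Bf_smul_left[OF eta2(1) eta2(1)] eta2(3)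
      by simp
    have "cmod (f b) \<le> (X / s + s * Y) / 2" unfolding fx X_def Y_def by (rule Bf_bound[OF xH eta2(1) s0])
    moreover have "X / s < a0" using Xs s0 by (simp add: divide_less_eq mult.commute)
    moreover have "s * Y < a0"
    proof -
      have "s * Y = a0 * (Y / (Y + 1))" unfolding s_def by simp
      also have "\<dots> < a0 * 1" using a0 Y0 by (intro mult_strict_left_mono) auto
      finally show ?thesis by simp
    qed
    ultimately have "cmod (f b) < a0" by simp
    then show False using big[of n] unfolding b_def a0_def by simp
  qed
  have nz: "Re \<alpha> = 0 \<Longrightarrow> 0 < t \<and> t \<le> 2"
  proof -
    assume z: "Re \<alpha> = 0"
    have w1w1z: "Bf w1 w1 = 0" using w1w1 z by (simp add: complex_eq_iff)
    have w2w2z: "Bf w2 w2 = 0" using w2w2 z by (simp add: complex_eq_iff)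
    have "Bf w1 w2 = 0" by (rule null_vanish[OF eta1 w1H w1e w1w1z w2H w2e])
    then have Ta: "(T - 2) * \<alpha> = 0" using w1w2 by (simp add: algebra_simps)
    show "0 < t \<and> t \<le> 2"
    proof (cases "\<alpha> = 0")
      case False
      then have "T = 2" using Ta by simp
      then have "complex_of_real (2 powr t) = complex_of_real 2" unfolding T_def by simp
      then have "(2::real) powr t = 2" by (simp only: of_real_eq_iff)
      then have "(2::real) powr t = 2 powr 1" by simp
      then have "t = 1" using powr_inj[of 2 t 1] by simp
      then show ?thesis by simp
    next
      case True
      have "w1 = (\<lambda>_. 0)" using vanish[OF eta1 eta2(1) norm12 w1H w1e w1w1z] w1f True by simp
      then have v1: "v 1 = \<eta>2" unfolding w1_def vadd_def smul_def by (simp add: fun_eq_iff)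
      have "w2 = (\<lambda>_. 0)" using vanish[OF eta1 eta2(1) norm12 w2H w2e w2w2z] w2f True by simp
      then have vm1: "v (-1) = \<eta>2" unfolding w2_def vadd_def smul_def by (simp add: fun_eq_iff)
      have red: "\<sigma> (gmat 1 b) \<eta>2 = \<eta>2" if l: "l > 0" and bb: "b = l * l * c" and vc: "v c = \<eta>2" for l b c
      proof -
        define m where "m = complex_of_real (l powr - t)"
        have m0: "m \<noteq> 0" unfolding m_def using l by simp
        have "smul m \<eta>2 = \<sigma> (gmat l 0) (\<sigma> (gmat 1 c) \<eta>2)" using vc F2[OF l] unfolding v_def m_def by simp
        also have "\<dots> = \<sigma> (gmat 1 b) (\<sigma> (gmat l 0) \<eta>2)" using Sc[OF l eta2(1), of c] bb by simp
        also have "\<dots> = smul m (\<sigma> (gmat 1 b) \<eta>2)" using F2[OF l] sS[OF P1 eta2(1)] unfolding m_def by simp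
        finally have "\<eta>2 = \<sigma> (gmat 1 b) \<eta>2" by (rule smul_cancel[OF m0])
        then show ?thesis by simp
      qed
      have Ufix: "\<sigma> (gmat 1 b) \<eta>2 = \<eta>2" for b
      proof -
        consider "b > 0" | "b < 0" | "b = 0" by linarith
        then show ?thesis
        proof cases
          case 1
          then show ?thesis using red[of "sqrt b" b 1] v1 by simp
        next
          case 2
          then show ?thesis using red[of "sqrt (- b)" b "-1"] vm1 by simp
        next
          case 3
          then show ?thesis using Id[OF eta2(1)] gmat_id by simp
        qed
      qed
      have Pfix: "\<rho> p (cline \<eta>2) = cline \<eta>2" if p: "p \<in> Pgrp" for p
      proof -
        obtain l b where pl: "p = gmat l b" and l: "l > 0" using p unfolding Pgrp_def by blast
        define m where "m = complex_of_real (l powr - t)"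
        have m0: "m \<noteq> 0" unfolding m_def using l by simp
        have "\<sigma> (gmat (1 * l) (1 * 0 + b * l / l)) \<eta>2 = \<sigma> (gmat 1 (b * l)) (\<sigma> (gmat l 0) \<eta>2)"
          using comp[where l=1 and b="b * l" and l'=l and b'=0 and x=\<eta>2] l eta2(1) by simp
        then have "\<sigma> p \<eta>2 = \<sigma> (gmat 1 (b * l)) (smul m \<eta>2)" using l F2[OF l] unfolding pl m_def by simp
        also have "\<dots> = smul m \<eta>2" using sS[OF P1 eta2(1)] Ufix by simp
        finally have sp: "\<sigma> p \<eta>2 = smul m \<eta>2" .
        have "\<forall>c. \<sigma> p (smul c \<eta>2) = smul c (\<sigma> p \<eta>2)" using sS[OF p eta2(1)] by blast
        then have "\<sigma> p ` cline \<eta>2 = cline \<eta>2"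
          using cline_image[where T="\<sigma> p" and x="\<eta>2" and m=m] sp m0 by blast
        moreover have "\<rho> p (cline \<eta>2) = \<sigma> p ` cline \<eta>2"
          using lift_rho p cline_lines[OF eta2(1,2)] by blast
        ultimately show ?thesis by simp
      qed
      have "cline \<eta>2 = cline \<eta>1" using eta1_uniq cline_bdry[OF eta2] Pfix by blast
      then show ?thesis using eta2_ne by simp
    qed
  qed
  show ?thesis
  proof (cases "Re \<alpha> > 0")
    case True
    then show ?thesis using le2 gt0 by simp
  next
    case False
    then have "Re \<alpha> = 0" using Rea by simp
    then show ?thesis using nz by simp
  qed
qed

end
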